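(* Let $\Sigma=(\mathcal{U},\mathcal{S})$ be a set system whose sets cover $\mathcal{U}$. The set-cover solution $\mathcal{C}$ (with its assignment and levels) returned by the procedure Greedy described below is stable. Greedy: initialize $I\gets\mathcal{U}$ and all levels $\mathcal{L}_j\gets\varnothing$; while $I\neq\varnothing$, pick $S^{*}\in\arg\max_{S\in\mathcal{S}}|I\cap S|$ (ties broken arbitrarily), set $\mathtt{cov}(S^{*})\gets I\cap S^{*}$ (i.e., assign every element of $I\cap S^*$ to $S^*$), add $S^{*}$ to the level $\mathcal{L}_j$ with $2^{j}\leq|\mathtt{cov}(S^{*})|<2^{j+1}$, and set $I\gets I\setminus\mathtt{cov}(S^{*})$; return $\mathcal{C}=\bigcup_{j\geq0}\mathcal{L}_j$.
   Context: A set system $\Sigma=(\mathcal{U},\mathcal{S})$ consists of a finite universe $\mathcal{U}$ and a finite collection $\mathcal{S}$ of subsets of $\mathcal{U}$; a set-cover solution is a subcollection $\mathcal{C}\subseteq\mathcal{S}$ with $\bigcup_{S\in\mathcal{C}}S=\mathcal{U}$. For a set-cover solution $\mathcal{C}$, an assignment is a map $\phi:\mathcal{U}\to\mathcal{C}$ with $u\in\phi(u)$ for every $u$. For $S\in\mathcal{C}$, its cover set is $\mathtt{cov}(S)=\{u\in\mathcal{U}:\phi(u)=S\}$. The sets of $\mathcal{C}$ are organized into levels $\mathcal{L}_j$, $j\in\{0,1,2,\dots\}$, each set of $\mathcal{C}$ lying in exactly one level, and $A_j=\{u\in\mathcal{U}:\phi(u)\in\mathcal{L}_j\}$. The solution is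 stable if (1) for each $j$ and each $S\in\mathcal{L}_j$, $2^{j}\leq|\mathtt{cov}(S)|<2^{j+1}$; and (2) for each level $\mathcal{L}_j$, there is no $S\in\mathcal{S}$ with $|S\cap A_j|\geq 2^{j+1}$. *)

theory Defs
  imports Main
begin

definition set_system :: "'a set \<Rightarrow> 'a set set \<Rightarrow> bool" where
  "set_system U Ss \<longleftrightarrow> finite U \<and> finite Ss \<and> (\<forall>S\<in>Ss. S \<subseteq> U)"

definition cov :: "'a set \<Rightarrow> ('a \<Rightarrow> 'a set) \<Rightarrow> 'a set \<Rightarrow> 'a set" where
  "cov U phi S = {u \<in> U. phi u = S}"

definition lvl_elems :: "'a set \<Rightarrow> ('a \<Rightarrow> 'a set) \<Rightarrow> ('a set \<Rightarrow> nat) \<Rightarrow> nat \<Rightarrow> 'a set" where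
  "lvl_elems U phi lev j = {u \<in> U. lev (phi u) = j}"

text \<open>Stable set-cover solution C with assignment phi and level function lev
  (S lies in level L_j iff lev S = j).\<close>
definition stable :: "'a set \<Rightarrow> 'a set set \<Rightarrow> 'a set set \<Rightarrow> ('a \<Rightarrow> 'a set) \<Rightarrow> ('a set \<Rightarrow> nat) \<Rightarrow> bool" where
  "stable U Ss C phi lev \<longleftrightarrow>
     C \<subseteq> Ss \<and> \<Union>C = U \<and>
     (\<forall>u\<in>U. phi u \<in> C \<and> u \<in> phi u) \<and>
     (\<forall>S\<in>C. 2 ^ lev S \<le> card (cov U phi S) \<and> card (cov U phi S) < 2 ^ (lev S + 1)) \<and>
     (\<forall>j. \<not> (\<exists>S\<in>Ss. card (S \<inter> lvl_elems U phi lev j) \<ge> 2 ^ (j + 1)))"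

text \<open>A run of Greedy starting from the uncovered set I, picking the sets of the list
  in order: each pick maximises |I \<inter> S| over Ss (ties arbitrary), and the loop stops
  exactly when I is empty.\<close>
fun greedy_run :: "'a set set \<Rightarrow> 'a set \<Rightarrow> 'a set list \<Rightarrow> bool" where
  "greedy_run Ss I [] \<longleftrightarrow> I = {}"
| "greedy_run Ss I (S # xs) \<longleftrightarrow>
     I \<noteq> {} \<and> S \<in> Ss \<and> (\<forall>T\<in>Ss. card (I \<inter> T) \<le> card (I \<inter> S)) \<and>
     greedy_run Ss (I - S) xs"

text \<open>Greedy's assignment: u is assigned to the pick at which it was first covered,
  i.e. the first set in the pick list containing u (cov(S*) = I \<inter> S*).\<close>
definition greedy_assign :: "'a set list \<Rightarrow> 'a \<Rightarrow> 'a set" where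
  "greedy_assign xs u = hd (filter (\<lambda>S. u \<in> S) xs)"

end

theory Submission
  imports Defs
begin

lemma run_cover: "greedy_run Ss I xs \<Longrightarrow> I \<subseteq> \<Union>(set xs)"
  by (induction xs arbitrary: I) auto

lemma run_sub: "greedy_run Ss I xs \<Longrightarrow> set xs \<subseteq> Ss"
  by (induction xs arbitrary: I) auto

lemma ga_in: "u \<in> \<Union>(set xs) \<Longrightarrow> greedy_assign xs u \<in> set xs \<and> u \<in> greedy_assign xs u"
proof -
  assume "u \<in> \<Union>(set xs)"
  then have ne: "filter (\<lambda>S. u \<in> S) xs \<noteq> []" by (auto simp: filter_empty_conv)
  have "hd (filter (\<lambda>S. u \<in> S) xs) \<in> set (filter (\<lambda>S. u \<in> S) xs)"
    using ne by (rule hd_in_set)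
  then show ?thesis unfolding greedy_assign_def by auto
qed

lemma ga_cons_in: "u \<in> S \<Longrightarrow> greedy_assign (S # xs) u = S"
  by (simp add: greedy_assign_def)

lemma ga_cons_out: "u \<notin> S \<Longrightarrow> greedy_assign (S # xs) u = greedy_assign xs u"
  by (simp add: greedy_assign_def)

lemma key:
  "greedy_run Ss I xs \<Longrightarrow> finite I \<Longrightarrow>
   (\<forall>S\<in>set xs. card {u\<in>I. greedy_assign xs u = S} < 2 ^ (lev S + 1)) \<Longrightarrow>
   T \<in> Ss \<Longrightarrow> card (T \<inter> {u\<in>I. lev (greedy_assign xs u) = j}) < 2 ^ (j + 1)"
proof (induction xs arbitrary: I)
  case Nil
  then show ?case by simp
next
  case (Cons S xs)
  have run: "greedy_run Ss (I - S) xs" and mx: "\<forall>T\<in>Ss. card (I \<inter> T) \<le> card (I \<inter> S)"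
    using Cons.prems(1) by auto
  have cov': "I - S \<subseteq> \<Union>(set xs)" using run_cover[OF run] .
  have eqo: "\<And>u. u \<in> I - S \<Longrightarrow> greedy_assign (S # xs) u = greedy_assign xs u"
    by (simp add: ga_cons_out)
  have neq: "\<And>u. u \<in> I - S \<Longrightarrow> greedy_assign xs u \<noteq> S"
  proof
    fix u assume u: "u \<in> I - S" and e: "greedy_assign xs u = S"
    have "u \<in> \<Union>(set xs)" using cov' u by (rule subsetD)
    then have "u \<in> greedy_assign xs u" by (rule ga_in[THEN conjunct2])
    then show False using u e by simp
  qed
  have covS: "{u\<in>I. greedy_assign (S # xs) u = S} = I \<inter> S"
  proof (rule set_eqI)
    fix u show "u \<in> {u\<in>I. greedy_assign (S # xs) u = S} \<longleftrightarrow> u \<in> I \<inter> S"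
    proof (cases "u \<in> S")
      case True then show ?thesis by (simp add: ga_cons_in)
    next
      case False then show ?thesis using neq[of u] by (simp add: ga_cons_out)
    qed
  qed
  have cS: "card (I \<inter> S) < 2 ^ (lev S + 1)"
    using Cons.prems(3) covS by auto
  show ?case
  proof (cases "lev S = j")
    case True
    have "card (T \<inter> {u\<in>I. lev (greedy_assign (S # xs) u) = j}) \<le> card (I \<inter> T)"
      by (rule card_mono) (use Cons.prems(2) in auto)
    also have "\<dots> \<le> card (I \<inter> S)" using mx Cons.prems(4) by auto
    finally show ?thesis using cS True by simp
  next
    case False
    have seteq: "T \<inter> {u\<in>I. lev (greedy_assign (S # xs) u) = j}
               = T \<inter> {u\<in>I - S. lev (greedy_assign xs u) = j}"
    proof (rule set_eqI)
      fix u show "u \<in> T \<inter> {u\<in>I. lev (greedy_assign (S # xs) u) = j} \<longleftrightarrow>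
                  u \<in> T \<inter> {u\<in>I - S. lev (greedy_assign xs u) = j}"
      proof (cases "u \<in> S")
        case True then show ?thesis using False by (simp add: ga_cons_in)
      next
        case F: False then show ?thesis by (simp add: ga_cons_out)
      qed
    qed
    have H: "\<forall>S'\<in>set xs. card {u\<in>I - S. greedy_assign xs u = S'} < 2 ^ (lev S' + 1)"
    proof
      fix S' assume S': "S' \<in> set xs"
      have "card {u\<in>I - S. greedy_assign xs u = S'} \<le> card {u\<in>I. greedy_assign (S # xs) u = S'}"
        by (rule card_mono) (use Cons.prems(2) eqo in auto)
      also have "\<dots> < 2 ^ (lev S' + 1)" using Cons.prems(3) S' by auto
      finally show "card {u\<in>I - S. greedy_assign xs u = S'} < 2 ^ (lev S' + 1)" .
    qed
    show ?thesis unfolding seteq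
      using Cons.IH[OF run _ H Cons.prems(4)] Cons.prems(2) by auto
  qed
qed

theorem lemma1:
  fixes U :: "'a set" and Ss :: "'a set set" and xs :: "'a set list"
    and lev :: "'a set \<Rightarrow> nat"
  assumes "set_system U Ss"
    and "\<Union>Ss = U"
    and "greedy_run Ss U xs"
    and "\<forall>S\<in>set xs. 2 ^ lev S \<le> card (cov U (greedy_assign xs) S)
                     \<and> card (cov U (greedy_assign xs) S) < 2 ^ (lev S + 1)"
  shows "stable U Ss (set xs) (greedy_assign xs) lev"
proof -
  have fin: "finite U" using assms(1) by (simp add: set_system_def)
  have sub: "set xs \<subseteq> Ss" using run_sub[OF assms(3)] .
  have c1: "U \<subseteq> \<Union>(set xs)" using run_cover[OF assms(3)] .
  have c2: "\<Union>(set xs) \<subseteq> U" using sub assms(2) by blast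
  have A: "\<forall>u\<in>U. greedy_assign xs u \<in> set xs \<and> u \<in> greedy_assign xs u"
  proof
    fix u assume "u \<in> U"
    then have "u \<in> \<Union>(set xs)" using c1 by (rule subsetD[rotated])
    then show "greedy_assign xs u \<in> set xs \<and> u \<in> greedy_assign xs u" by (rule ga_in)
  qed
  have B: "\<forall>j. \<not> (\<exists>S\<in>Ss. card (S \<inter> lvl_elems U (greedy_assign xs) lev j) \<ge> 2 ^ (j + 1))"
  proof (intro allI notI)
    fix j assume "\<exists>S\<in>Ss. card (S \<inter> lvl_elems U (greedy_assign xs) lev j) \<ge> 2 ^ (j + 1)"
    then obtain T where T: "T \<in> Ss" "card (T \<inter> lvl_elems U (greedy_assign xs) lev j) \<ge> 2 ^ (j + 1)"
      by blast
    have H: "\<forall>S\<in>set xs. card {u\<in>U. greedy_assign xs u = S} < 2 ^ (lev S + 1)"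
      using assms(4) by (simp add: cov_def)
    have "card (T \<inter> {u\<in>U. lev (greedy_assign xs u) = j}) < 2 ^ (j + 1)"
      by (rule key[OF assms(3) fin H T(1)])
    then show False using T(2) by (simp add: lvl_elems_def)
  qed
  have C: "\<Union>(set xs) = U" using c1 c2 by (rule equalityI[rotated])
  show ?thesis unfolding stable_def using sub C A B assms(4) by blast
qed

end
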